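(* Let $0<p<1$, let $n\ge 1$, $0\le m\le n$ and $d\ge 1$ be integers, and let $X_1,\ldots,X_n$ be i.i.d. Bernoulli random variables with $P(X_i=1)=p$. Let $L_n$ be the length of the longest run of consecutive $1$'s in $X_1,\ldots,X_n$ (with $L_n=0$ if there is no $1$). Consider the finite set of states $\mathcal{S}=\{(l,j): 0\le l\le m,\ 0\le j\le \min(l,d-1)\}$, where $l$ records the number of $1$'s observed so far and $j$ the length of the current trailing run of $1$'s (the longest suffix of the form $1\cdots1$ of length less than $d$). For $t=1,\ldots,n$ let $\mathbf{N}_t(m)$ be the $\mathcal{S}\times\mathcal{S}$ matrix whose only nonzero entries are \[ \mathbf{N}_t(m)\big((l,j),(l+1,j+1)\big)=\frac{m-l}{n-t+1}\quad\text{if } l+1\le m \text{ and } j+1\le d-1, \] \[ \mathbf{N}_t(m)\big((l,j),(l,0)\big)=\frac{n-m-t+l+1}{n-t+1}, \] (all other entries, in particular transitions that would complete a run of $d$ ones, being $0$). Let $\boldsymbol{\xi}_0$ be the row vector indexed by $\mathcal{S}$ with entry $1$ at $(0,0)$ and $0$ elsewhere, and $\mathbf{1}$ the all-ones row vector indexed by $\mathcal{S}$. Then \[ P\Big(L_n<d \,\Big|\, \sum_{i=1}^n X_i=m\Big)=\boldsymbol{\xi}_0\prod_{t=1}^{n}\mathbf{N}_t(m)\,\mathbf{1}^{\top}. \] In particular this conditional probability does not depend on $p$.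
   Context: The matrices $\mathbf{N}_t(m)$ are the essential (non-absorbing) parts of the transition matrices of a nonhomogeneous Markov chain imbedding the outcome of a uniformly random arrangement of $m$ ones and $n-m$ zeros: at step $t$, given $l$ ones among the first $t-1$ positions, the next symbol is $1$ with probability $(m-l)/(n-t+1)$ and $0$ with probability $(n-m-(t-1-l))/(n-t+1)$; entering a run of $d$ ones corresponds to absorption and is excluded from the essential part. *)

theory Defs
  imports "HOL-Probability.Probability"
begin

text \<open>Sample space: X_1..X_n i.i.d. Bernoulli(p), encoded as a random function
  omega :: nat => bool (X_i = 1 iff omega i), for i in {1..n}.\<close>
definition bern_seq :: "nat \<Rightarrow> real \<Rightarrow> (nat \<Rightarrow> bool) pmf" where
  "bern_seq n p = Pi_pmf {1..n} False (\<lambda>_. bernoulli_pmf p)"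

definition num_ones :: "nat \<Rightarrow> (nat \<Rightarrow> bool) \<Rightarrow> nat" where
  "num_ones n \<omega> = (\<Sum>i=1..n. of_bool (\<omega> i))"

definition longest_run :: "nat \<Rightarrow> (nat \<Rightarrow> bool) \<Rightarrow> nat" where
  "longest_run n \<omega> = Max {k. \<exists>s. 1 \<le> s \<and> s + k \<le> n + 1 \<and> (\<forall>i\<in>{s..<s+k}. \<omega> i)}"

definition states :: "nat \<Rightarrow> nat \<Rightarrow> (nat \<times> nat) set" where
  "states m d = {(l, j). l \<le> m \<and> j \<le> min l (d - 1)}"

definition Nmat :: "nat \<Rightarrow> nat \<Rightarrow> nat \<Rightarrow> nat \<Rightarrow> nat \<times> nat \<Rightarrow> nat \<times> nat \<Rightarrow> real" where
  "Nmat n m d t = (\<lambda>(l, j) (l', j').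
     if l' = l + 1 \<and> j' = j + 1 \<and> l + 1 \<le> m \<and> j + 1 \<le> d - 1
       then (real m - real l) / (real n - real t + 1)
     else if l' = l \<and> j' = 0
       then (real n - real m - real t + real l + 1) / (real n - real t + 1)
     else 0)"

definition matmul :: "'s set \<Rightarrow> ('s \<Rightarrow> 's \<Rightarrow> real) \<Rightarrow> ('s \<Rightarrow> 's \<Rightarrow> real) \<Rightarrow> 's \<Rightarrow> 's \<Rightarrow> real" where
  "matmul S A B = (\<lambda>a c. \<Sum>b\<in>S. A a b * B b c)"

fun matprod :: "'s set \<Rightarrow> (nat \<Rightarrow> 's \<Rightarrow> 's \<Rightarrow> real) \<Rightarrow> nat \<Rightarrow> 's \<Rightarrow> 's \<Rightarrow> real" where
  "matprod S M 0 = (\<lambda>a c. if a = c then 1 else 0)"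
| "matprod S M (Suc k) = matmul S (matprod S M k) (M (Suc k))"

end

theory Submission imports Defs begin

definition DD :: "nat \<Rightarrow> (nat \<Rightarrow> bool) set" where
  "DD k = {w. \<forall>i. w i \<longrightarrow> i \<in> {1..k}}"

fun trl :: "nat \<Rightarrow> (nat \<Rightarrow> bool) \<Rightarrow> nat" where
  "trl 0 w = 0"
| "trl (Suc k) w = (if w (Suc k) then Suc (trl k w) else 0)"

fun okr :: "nat \<Rightarrow> nat \<Rightarrow> (nat \<Rightarrow> bool) \<Rightarrow> bool" where
  "okr d 0 w = True"
| "okr d (Suc k) w = (okr d k w \<and> (w (Suc k) \<longrightarrow> Suc (trl k w) < d))"

lemma DD_Suc: "DD (Suc k) = DD k \<union> (\<lambda>w. w(Suc k := True)) ` DD k"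
proof
  show "DD (Suc k) \<subseteq> DD k \<union> (\<lambda>w. w(Suc k := True)) ` DD k"
  proof
    fix w assume w: "w \<in> DD (Suc k)"
    show "w \<in> DD k \<union> (\<lambda>w. w(Suc k := True)) ` DD k"
    proof (cases "w (Suc k)")
      case True
      have "w(Suc k := False) \<in> DD k" using w by (auto simp: DD_def le_Suc_eq)
      moreover have "w = (w(Suc k := False))(Suc k := True)" using True by (auto simp: fun_eq_iff)
      ultimately show ?thesis by blast
    next
      case False
      then have "w \<in> DD k" using w by (auto simp: DD_def le_Suc_eq)
      then show ?thesis by blast
    qed
  qed
qed (auto simp: DD_def split: if_splits)

lemma DD_not: "w \<in> DD k \<Longrightarrow> \<not> w (Suc k)"
  by (auto simp: DD_def)

lemma DD_disj: "DD k \<inter> (\<lambda>w. w(Suc k := True)) ` DD k = {}"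
  by (auto dest: DD_not)

lemma DD_inj: "inj_on (\<lambda>w. w(Suc k := True)) (DD k)"
proof (rule inj_onI)
  fix x y assume x: "x \<in> DD k" and y: "y \<in> DD k" and eq: "x(Suc k := True) = y(Suc k := True)"
  show "x = y"
  proof
    fix i show "x i = y i"
    proof (cases "i = Suc k")
      case True thus ?thesis using DD_not[OF x] DD_not[OF y] by simp
    next
      case False thus ?thesis using fun_cong[OF eq, of i] by simp
    qed
  qed
qed

lemma DD_0: "DD 0 = {\<lambda>_. False}"
  by (auto simp: DD_def)

lemma DD_finite: "finite (DD k)"
  by (induction k) (auto simp: DD_0 DD_Suc)

lemma sum_DD_Suc:
  "(\<Sum>w\<in>DD (Suc k). g w) = (\<Sum>w\<in>DD k. g w) + (\<Sum>w\<in>DD k. g (w(Suc k := True)))"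
  unfolding DD_Suc
  by (subst sum.union_disjoint) (auto simp: DD_finite DD_disj sum.reindex[OF DD_inj])

lemma trl_cong: "(\<And>i. 1 \<le> i \<Longrightarrow> i \<le> k \<Longrightarrow> w i = w' i) \<Longrightarrow> trl k w = trl k w'"
  by (induction k) auto

lemma okr_cong: "(\<And>i. 1 \<le> i \<Longrightarrow> i \<le> k \<Longrightarrow> w i = w' i) \<Longrightarrow> okr d k w = okr d k w'"
proof (induction k)
  case (Suc k)
  have "trl k w = trl k w'" by (rule trl_cong) (use Suc.prems in auto)
  with Suc show ?case by auto
qed simp

lemma ones_cong: "(\<And>i. 1 \<le> i \<Longrightarrow> i \<le> k \<Longrightarrow> w i = w' i) \<Longrightarrow> num_ones k w = num_ones k w'"
  unfolding num_ones_def by (rule sum.cong) auto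

lemma trl_upd: "trl k (w(Suc k := b)) = trl k w"
  by (rule trl_cong) auto
lemma okr_upd: "okr d k (w(Suc k := b)) = okr d k w"
  by (rule okr_cong) auto
lemma ones_upd: "num_ones k (w(Suc k := b)) = num_ones k w"
  by (rule ones_cong) auto

lemma ones_Suc: "num_ones (Suc k) w = num_ones k w + of_bool (w (Suc k))"
  unfolding num_ones_def by (simp add: sum.cl_ivl_Suc)

lemma ones_0: "num_ones 0 w = 0"
  unfolding num_ones_def by simp

lemma ones_le: "num_ones k w \<le> k"
  by (induction k) (auto simp: ones_Suc ones_0)

lemma trl_le: "trl k w \<le> num_ones k w"
  by (induction k) (auto simp: ones_Suc ones_0)

lemma okr_trl: "0 < d \<Longrightarrow> okr d k w \<Longrightarrow> trl k w < d"
  by (induction k) auto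


definition AA :: "nat \<Rightarrow> nat \<Rightarrow> nat \<Rightarrow> nat \<Rightarrow> real" where
  "AA d k l j = (\<Sum>w\<in>DD k. of_bool (num_ones k w = l \<and> okr d k w \<and> trl k w = j))"

lemma AA_0: "AA d 0 l j = of_bool (l = 0 \<and> j = 0)"
  by (simp add: AA_def DD_0 ones_0)

lemma AA_zero: "k < l \<Longrightarrow> AA d k l j = 0"
  unfolding AA_def using ones_le[of k] by (intro sum.neutral) (metis leD of_bool_eq(1))

lemma AA_Suc0: "AA d (Suc k) l 0 = (\<Sum>w\<in>DD k. of_bool (num_ones k w = l \<and> okr d k w))"
  unfolding AA_def sum_DD_Suc
  by (auto intro!: sum.cong simp: ones_Suc DD_not trl_upd okr_upd ones_upd)

lemma AA_SucSuc: "AA d (Suc k) l (Suc j) = (if Suc j < d \<and> 1 \<le> l then AA d k (l - 1) j else 0)"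
proof -
  have "AA d (Suc k) l (Suc j) = (\<Sum>w\<in>DD k. of_bool (num_ones k w + 1 = l \<and> okr d k w \<and> Suc (trl k w) < d \<and> trl k w = j))"
    unfolding AA_def sum_DD_Suc
    by (auto intro!: sum.cong simp: ones_Suc DD_not trl_upd okr_upd ones_upd)
  also have "\<dots> = (if Suc j < d \<and> 1 \<le> l then AA d k (l - 1) j else 0)"
    unfolding AA_def by (auto intro!: sum.cong sum.neutral)
  finally show ?thesis .
qed

lemma AA_sumj: assumes "0 < d"
  shows "(\<Sum>w\<in>DD k. of_bool (num_ones k w = l \<and> okr d k w)) = (\<Sum>j\<in>{..min l (d-1)}. AA d k l j)"
proof -
  have "(\<Sum>j\<in>{..min l (d-1)}. AA d k l j) =
     (\<Sum>w\<in>DD k. \<Sum>j\<in>{..min l (d-1)}. if j = trl k w then of_bool (num_ones k w = l \<and> okr d k w) else 0)"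
    unfolding AA_def by (subst sum.swap) (auto intro!: sum.cong)
  also have "\<dots> = (\<Sum>w\<in>DD k. of_bool (num_ones k w = l \<and> okr d k w))"
  proof (rule sum.cong)
    fix w assume "w \<in> DD k"
    have "num_ones k w = l \<and> okr d k w \<Longrightarrow> trl k w \<in> {..min l (d-1)}"
      using okr_trl[OF assms, of k w] trl_le[of k w] by auto
    then show "(\<Sum>j\<in>{..min l (d-1)}. if j = trl k w then of_bool (num_ones k w = l \<and> okr d k w) else (0::real))
       = of_bool (num_ones k w = l \<and> okr d k w)"
      by (cases "num_ones k w = l \<and> okr d k w") (simp_all add: sum.delta)
  qed simp
  finally show ?thesis by simp
qed

lemma trl_ge: "r \<le> trl k w \<longleftrightarrow> r \<le> k \<and> (\<forall>i. k - r < i \<and> i \<le> k \<longrightarrow> w i)"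
proof (induction k arbitrary: r)
  case 0 then show ?case by auto
next
  case (Suc k)
  show ?case
  proof (cases r)
    case 0 then show ?thesis by auto
  next
    case (Suc r')
    show ?thesis
    proof (cases "w (Suc k)")
      case True
      have "Suc r' \<le> trl (Suc k) w \<longleftrightarrow> r' \<le> trl k w" using True by simp
      also have "\<dots> \<longleftrightarrow> r' \<le> k \<and> (\<forall>i. k - r' < i \<and> i \<le> k \<longrightarrow> w i)" by (rule Suc.IH)
      also have "\<dots> \<longleftrightarrow> Suc r' \<le> Suc k \<and> (\<forall>i. Suc k - Suc r' < i \<and> i \<le> Suc k \<longrightarrow> w i)"
        using True by (auto simp: le_Suc_eq)
      finally show ?thesis using Suc by simp
    next
      case False
      then show ?thesis using Suc by (auto intro!: exI[of _ "Suc k"])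
    qed
  qed
qed

definition blk :: "nat \<Rightarrow> nat \<Rightarrow> (nat \<Rightarrow> bool) \<Rightarrow> bool" where
  "blk d k w = (\<exists>s. 1 \<le> s \<and> s + d \<le> k + 1 \<and> (\<forall>i\<in>{s..<s+d}. w i))"

lemma blk_Suc: "blk d (Suc k) w \<longleftrightarrow> blk d k w \<or> (d \<le> Suc k \<and> (\<forall>i. Suc k - d < i \<and> i \<le> Suc k \<longrightarrow> w i))"
proof
  assume "blk d (Suc k) w"
  then obtain s where s: "1 \<le> s" "s + d \<le> Suc k + 1" "\<forall>i\<in>{s..<s+d}. w i" unfolding blk_def by auto
  show "blk d k w \<or> (d \<le> Suc k \<and> (\<forall>i. Suc k - d < i \<and> i \<le> Suc k \<longrightarrow> w i))"
  proof (cases "s + d \<le> k + 1")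
    case True then show ?thesis using s unfolding blk_def by auto
  next
    case False
    then have "s + d = Suc k + 1" using s by simp
    then show ?thesis using s by auto
  qed
next
  assume "blk d k w \<or> (d \<le> Suc k \<and> (\<forall>i. Suc k - d < i \<and> i \<le> Suc k \<longrightarrow> w i))"
  then show "blk d (Suc k) w"
  proof
    assume "blk d k w" then show ?thesis unfolding blk_def by force
  next
    assume h: "d \<le> Suc k \<and> (\<forall>i. Suc k - d < i \<and> i \<le> Suc k \<longrightarrow> w i)"
    show ?thesis unfolding blk_def
      by (rule exI[of _ "Suc k + 1 - d"]) (use h in auto)
  qed
qed

lemma okr_blk: assumes "0 < d" shows "okr d k w \<longleftrightarrow> \<not> blk d k w"
proof (induction k)
  case 0 then show ?case using assms by (auto simp: blk_def)
next
  case (Suc k)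
  have "(w (Suc k) \<and> d - 1 \<le> trl k w) \<longleftrightarrow> (d \<le> Suc k \<and> (\<forall>i. Suc k - d < i \<and> i \<le> Suc k \<longrightarrow> w i))"
    unfolding trl_ge using assms by (auto simp: le_Suc_eq)
  then show ?case using Suc by (auto simp: blk_Suc)
qed

lemma lr_blk: assumes "0 < d" shows "longest_run n w < d \<longleftrightarrow> \<not> blk d n w"
proof -
  let ?K = "{k. \<exists>s. 1 \<le> s \<and> s + k \<le> n + 1 \<and> (\<forall>i\<in>{s..<s+k}. w i)}"
  have fin: "finite ?K" by (rule finite_subset[of _ "{..n}"]) auto
  have ne: "0 \<in> ?K" by (rule CollectI, rule exI[of _ 1]) simp
  have "longest_run n w < d \<longleftrightarrow> (\<forall>k\<in>?K. k < d)"
    unfolding longest_run_def using Max_less_iff[OF fin] ne by blast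
  also have "\<dots> \<longleftrightarrow> d \<notin> ?K"
  proof
    assume "\<forall>k\<in>?K. k < d" then show "d \<notin> ?K" by blast
  next
    assume nd: "d \<notin> ?K"
    show "\<forall>k\<in>?K. k < d"
    proof (rule ccontr)
      assume "\<not> (\<forall>k\<in>?K. k < d)"
      then obtain k s where "d \<le> k" "1 \<le> s" "s + k \<le> n + 1" "\<forall>i\<in>{s..<s+k}. w i" using not_less by blast
      then have "d \<in> ?K" by (intro CollectI exI[of _ s]) auto
      with nd show False by blast
    qed
  qed
  also have "\<dots> \<longleftrightarrow> \<not> blk d n w" unfolding blk_def by simp
  finally show ?thesis .
qed


definition ww :: "nat \<Rightarrow> nat \<Rightarrow> nat \<Rightarrow> nat \<Rightarrow> real" where
  "ww n m k l = (\<Prod>i<l. real m - real i) * (\<Prod>i<k-l. real (n-m) - real i) / (\<Prod>i<k. real n - real i)"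

lemma den_nz: "k \<le> n \<Longrightarrow> (\<Prod>i<k. real n - real i) \<noteq> 0"
  by (auto simp: prod_zero_iff)

lemma ww_0: "ww n m 0 0 = 1" by (simp add: ww_def)

lemma ww_Suc0: assumes "l \<le> k" "k < n" "m \<le> n"
  shows "ww n m (Suc k) l = ww n m k l *
    ((real n - real m - real (Suc k) + real l + 1) / (real n - real (Suc k) + 1))"
proof -
  have e: "Suc k - l = Suc (k - l)" using assms by simp
  have nz: "(\<Prod>i<k. real n - real i) \<noteq> 0" using assms by (intro den_nz) simp
  have nz2: "real n - real k \<noteq> 0" using assms by simp
  show ?thesis unfolding ww_def e prod.lessThan_Suc
    using nz nz2 assms by (simp add: of_nat_diff field_simps)
qed

lemma ww_Suc1: assumes "1 \<le> l" "k < n"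
  shows "ww n m (Suc k) l = ww n m k (l - 1) *
    ((real m - real (l - 1)) / (real n - real (Suc k) + 1))"
proof -
  obtain l' where l: "l = Suc l'" using assms by (cases l) auto
  have nz: "(\<Prod>i<k. real n - real i) \<noteq> 0" using assms by (intro den_nz) simp
  have nz2: "real n - real k \<noteq> 0" using assms by simp
  show ?thesis unfolding ww_def l prod.lessThan_Suc
    using nz nz2 assms by (simp add: field_simps)
qed

lemma states_Sigma: "states m d = Sigma {..m} (\<lambda>l. {..min l (d-1)})"
  by (auto simp: states_def)

lemma states_finite: "finite (states m d)"
  unfolding states_Sigma by auto

lemma N_0: "Nmat n m d t (l, j) (l', 0) = (if l = l' then (real n - real m - real t + real l' + 1) / (real n - real t + 1) else 0)"
  by (auto simp: Nmat_def)

lemma N_1: assumes "1 \<le> l'" "l' \<le> m" "Suc j0 \<le> d - 1"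
  shows "Nmat n m d t b (l', Suc j0) = (if b = (l' - 1, j0) then (real m - real (l' - 1)) / (real n - real t + 1) else 0)"
  using assms by (cases b) (auto simp: Nmat_def)

lemma main_ind:
  assumes "m \<le> n" "0 < d"
  shows "k \<le> n \<Longrightarrow> c \<in> states m d \<Longrightarrow>
    matprod (states m d) (Nmat n m d) k (0,0) c = AA d k (fst c) (snd c) * ww n m k (fst c)"
proof (induction k arbitrary: c)
  case 0
  then show ?case by (cases c) (auto simp: AA_0 ww_0)
next
  case (Suc k)
  obtain l' j' where c: "c = (l', j')" by (cases c)
  have cS: "l' \<le> m" "j' \<le> min l' (d-1)" using Suc.prems c by (auto simp: states_def)
  have kn: "k < n" using Suc.prems by simp
  let ?S = "states m d"
  have "matprod ?S (Nmat n m d) (Suc k) (0,0) c =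
     (\<Sum>b\<in>?S. AA d k (fst b) (snd b) * ww n m k (fst b) * Nmat n m d (Suc k) b c)"
    using Suc by (auto simp: matmul_def intro!: sum.cong)
  also have "\<dots> = AA d (Suc k) l' j' * ww n m (Suc k) l'"
  proof (cases j')
    case 0
    let ?a = "(real n - real m - real (Suc k) + real l' + 1) / (real n - real (Suc k) + 1)"
    have "(\<Sum>b\<in>?S. AA d k (fst b) (snd b) * ww n m k (fst b) * Nmat n m d (Suc k) b c)
       = (\<Sum>l\<in>{..m}. \<Sum>j\<in>{..min l (d-1)}. AA d k l j * ww n m k l * (if l = l' then ?a else 0))"
      unfolding states_Sigma c 0 by (subst sum.Sigma, simp, simp, rule sum.cong, simp, clarsimp simp: N_0)
    also have "\<dots> = (\<Sum>l\<in>{..m}. if l = l' then (\<Sum>j\<in>{..min l (d-1)}. AA d k l j * ww n m k l * ?a) else 0)"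
      by (rule sum.cong) auto
    also have "\<dots> = (\<Sum>j\<in>{..min l' (d-1)}. AA d k l' j) * ww n m k l' * ?a"
      using cS by (simp add: sum.delta sum_distrib_right sum_divide_distrib)
    also have "\<dots> = AA d (Suc k) l' 0 * ww n m (Suc k) l'"
    proof (cases "l' \<le> k")
      case True
      then show ?thesis using kn assms by (simp add: AA_Suc0 AA_sumj ww_Suc0)
    next
      case False
      then show ?thesis using assms by (simp add: AA_Suc0 AA_sumj AA_zero)
    qed
    finally show ?thesis using 0 by simp
  next
    case (Suc j0)
    have l1: "1 \<le> l'" using cS Suc by simp
    have jd: "Suc j0 \<le> d - 1" using cS Suc by simp
    let ?b = "(real m - real (l' - 1)) / (real n - real (Suc k) + 1)"
    have bS: "(l' - 1, j0) \<in> ?S" using cS Suc l1 by (auto simp: states_def)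
    have "(\<Sum>b\<in>?S. AA d k (fst b) (snd b) * ww n m k (fst b) * Nmat n m d (Suc k) b c)
      = (\<Sum>b\<in>?S. if b = (l' - 1, j0) then AA d k (fst b) (snd b) * ww n m k (fst b) * ?b else 0)"
      unfolding c Suc using N_1[OF l1 cS(1) jd] by (intro sum.cong) auto
    also have "\<dots> = AA d k (l' - 1) j0 * ww n m k (l' - 1) * ?b"
      using bS states_finite by (simp add: sum.delta)
    also have "\<dots> = AA d (Suc k) l' (Suc j0) * ww n m (Suc k) l'"
    proof -
      have "Suc j0 < d" using jd by simp
      then show ?thesis using l1 kn by (simp add: AA_SucSuc ww_Suc1)
    qed
    finally show ?thesis using Suc by simp
  qed
  finally show ?case using c by simp
qed


lemma HH: "(\<Sum>w\<in>DD k. of_bool (num_ones k w = l) :: real) = real (k choose l)"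
proof (induction k arbitrary: l)
  case 0 then show ?case by (simp add: DD_0 ones_0)
next
  case (Suc k)
  have "(\<Sum>w\<in>DD (Suc k). of_bool (num_ones (Suc k) w = l) :: real) =
     (\<Sum>w\<in>DD k. of_bool (num_ones k w = l)) + (\<Sum>w\<in>DD k. of_bool (num_ones k w + 1 = l))"
    unfolding sum_DD_Suc by (auto intro!: sum.cong simp: ones_Suc DD_not ones_upd)
  also have "\<dots> = real (Suc k choose l)"
  proof (cases l)
    case 0 then show ?thesis using Suc.IH[of 0] by simp
  next
    case (Suc l')
    then show ?thesis using Suc.IH[of l] Suc.IH[of l'] by simp
  qed
  finally show ?case .
qed

lemma prod_bern: assumes "0 \<le> p" "p \<le> 1"
  shows "(\<Prod>i\<in>{1..k}. pmf (bernoulli_pmf p) (w i)) = p ^ num_ones k w * (1 - p) ^ (k - num_ones k w)"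
proof (induction k)
  case 0 then show ?case by (simp add: ones_0)
next
  case (Suc k)
  have le: "num_ones k w \<le> k" by (rule ones_le)
  show ?case
  proof (cases "w (Suc k)")
    case True
    then show ?thesis using Suc assms by (simp add: prod.cl_ivl_Suc ones_Suc)
  next
    case False
    have "Suc k - num_ones k w = Suc (k - num_ones k w)" using le by simp
    then show ?thesis using Suc assms False by (simp add: prod.cl_ivl_Suc ones_Suc)
  qed
qed

lemma prob_eq: assumes "0 \<le> p" "p \<le> 1"
  shows "measure_pmf.prob (bern_seq n p) E =
    (\<Sum>w\<in>DD n. of_bool (w \<in> E) * (p ^ num_ones n w * (1 - p) ^ (n - num_ones n w)))"
proof -
  have sub: "set_pmf (bern_seq n p) \<subseteq> DD n"
    unfolding bern_seq_def using set_Pi_pmf_subset[of "{1..n}" False "\<lambda>_. bernoulli_pmf p"]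
    by (auto simp: DD_def)
  have "measure_pmf.prob (bern_seq n p) E = measure_pmf.prob (bern_seq n p) (E \<inter> DD n)"
    by (rule measure_eq_AE) (use sub in \<open>auto simp: AE_measure_pmf_iff\<close>)
  also have "\<dots> = sum (pmf (bern_seq n p)) (E \<inter> DD n)"
    by (rule measure_measure_pmf_finite) (simp add: DD_finite)
  also have "\<dots> = sum (pmf (bern_seq n p)) (DD n \<inter> E)" by (simp add: Int_commute)
  also have "\<dots> = (\<Sum>w\<in>DD n. if w \<in> E then pmf (bern_seq n p) w else 0)"
    by (rule sum.inter_restrict) (simp add: DD_finite)
  also have "\<dots> = (\<Sum>w\<in>DD n. of_bool (w \<in> E) * (p ^ num_ones n w * (1 - p) ^ (n - num_ones n w)))"
  proof (rule sum.cong)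
    fix w assume w: "w \<in> DD n"
    have "pmf (bern_seq n p) w = (\<Prod>i\<in>{1..n}. pmf (bernoulli_pmf p) (w i))"
      unfolding bern_seq_def using w by (subst pmf_Pi) (auto simp: DD_def)
    then show "(if w \<in> E then pmf (bern_seq n p) w else 0) = of_bool (w \<in> E) * (p ^ num_ones n w * (1 - p) ^ (n - num_ones n w))"
      using prod_bern[OF assms] by simp
  qed simp
  finally show ?thesis .
qed

lemma prod_fact: "(\<Prod>i<k. real k - real i) = fact k"
proof (induction k)
  case 0 then show ?case by simp
next
  case (Suc k)
  have "(\<Prod>i<Suc k. real (Suc k) - real i) = real (Suc k) * (\<Prod>i<k. real (Suc k) - real (Suc i))"
    by (subst prod.lessThan_Suc_shift) simp
  also have "\<dots> = real (Suc k) * fact k" using Suc by simp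
  finally show ?case by (simp add: fact_Suc)
qed

theorem mainTheorem1:
  fixes p :: real and n m d :: nat
  assumes "0 < p" "p < 1" "1 \<le> n" "m \<le> n" "1 \<le> d"
  shows "measure_pmf.prob (bern_seq n p) {\<omega>. longest_run n \<omega> < d \<and> num_ones n \<omega> = m}
           / measure_pmf.prob (bern_seq n p) {\<omega>. num_ones n \<omega> = m}
         = (\<Sum>a\<in>states m d. \<Sum>c\<in>states m d.
              (if a = (0, 0) then 1 else 0) * matprod (states m d) (Nmat n m d) n a c * 1)"
proof -
  have d0: "0 < d" using assms by simp
  define cc where "cc = p ^ m * (1 - p) ^ (n - m)"
  have ccpos: "cc > 0" unfolding cc_def using assms by simp
  define G where "G = (\<Sum>w\<in>DD n. of_bool (num_ones n w = m \<and> okr d n w) :: real)"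
  have PE: "measure_pmf.prob (bern_seq n p) {\<omega>. longest_run n \<omega> < d \<and> num_ones n \<omega> = m} = G * cc"
    unfolding prob_eq[OF less_imp_le[OF assms(1)] less_imp_le[OF assms(2)]] G_def sum_distrib_right
    by (rule sum.cong) (auto simp: cc_def lr_blk[OF d0] okr_blk[OF d0])
  have PF: "measure_pmf.prob (bern_seq n p) {\<omega>. num_ones n \<omega> = m} = real (n choose m) * cc"
    unfolding prob_eq[OF less_imp_le[OF assms(1)] less_imp_le[OF assms(2)]] HH[symmetric] sum_distrib_right
    by (rule sum.cong) (auto simp: cc_def)
  have Hpos: "real (n choose m) > 0" using assms by simp
  let ?S = "states m d"
  let ?M = "matprod ?S (Nmat n m d) n"
  have z: "(0::nat, 0::nat) \<in> ?S" by (simp add: states_def)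
  have "(\<Sum>a\<in>?S. \<Sum>c\<in>?S. (if a = (0, 0) then 1 else 0) * ?M a c * 1)
      = (\<Sum>a\<in>?S. if a = (0,0) then (\<Sum>c\<in>?S. ?M a c) else 0)"
    by (rule sum.cong) auto
  also have "\<dots> = (\<Sum>c\<in>?S. ?M (0,0) c)" using z states_finite by (simp add: sum.delta')
  also have "\<dots> = (\<Sum>c\<in>?S. AA d n (fst c) (snd c) * ww n m n (fst c))"
    by (rule sum.cong) (use main_ind[OF assms(4) d0] in auto)
  also have "\<dots> = (\<Sum>l\<in>{..m}. \<Sum>j\<in>{..min l (d-1)}. AA d n l j * ww n m n l)"
    unfolding states_Sigma by (subst sum.Sigma, simp, simp, rule sum.cong, simp, clarsimp)
  also have "\<dots> = (\<Sum>l\<in>{..m}. if l = m then (\<Sum>j\<in>{..min l (d-1)}. AA d n l j * ww n m n l) else 0)"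
  proof (rule sum.cong)
    fix l assume l: "l \<in> {..m}"
    have "l < m \<Longrightarrow> ww n m n l = 0"
    proof -
      assume "l < m"
      then have "n - m \<in> {..<n-l}" using assms by auto
      then have "(\<Prod>i<n-l. real (n-m) - real i) = 0" by (intro prod_zero) auto
      then show ?thesis unfolding ww_def by simp
    qed
    then show "(\<Sum>j\<in>{..min l (d-1)}. AA d n l j * ww n m n l) = (if l = m then (\<Sum>j\<in>{..min l (d-1)}. AA d n l j * ww n m n l) else 0)"
      using l by auto
  qed simp
  also have "\<dots> = G * ww n m n m"
    unfolding G_def AA_sumj[OF d0] by (simp add: sum.delta' sum_distrib_right)
  also have "ww n m n m = 1 / real (n choose m)"
    unfolding ww_def prod_fact binomial_fact[OF assms(4)] using assms by simp
  finally have R: "(\<Sum>a\<in>?S. \<Sum>c\<in>?S. (if a = (0, 0) then 1 else 0) * ?M a c * 1) = G / real (n choose m)"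
    by simp
  show ?thesis unfolding PE PF R using ccpos Hpos by simp
qed

end
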